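(* Let $(\mathbb{X},d,\mu)$ be a metric measure space such that $\mu$ is ring-continuous. Let $\Omega\subset\mathbb{X}$ be a domain and $\varrho$ a continuous admissible radius function in $\Omega$. Then $\mathcal{M}$ maps $L^\infty(\Omega)$ into $C(\Omega)$.
   Context: A metric measure space $(\mathbb{X},d,\mu)$ is a metric space with a positive Borel regular measure $\mu$ with $0<\mu(B)<\infty$ for every ball $B$. $\mu$ is ring-continuous if for each $x\in\mathbb{X}$ the function $r\mapsto\mu(B(x,r))$ is continuous on $(0,\infty)$. An admissible radius function in $\Omega$ is $\varrho\in C(\overline\Omega)$, $\varrho\ge0$, with $0<\varrho(x)\leq\mathrm{dist}(x,\partial\Omega)$ for $x\in\Omega$ and $\varrho=0$ exactly on $\partial\Omega$. For $x\in\Omega$, $B_x=\overline{B}(x,\varrho(x))$ and $\mathcal{M}u(x)=\frac{1}{\mu(B_x)}\int_{B_x}u\,d\mu$. *)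

theory Defs
  imports "HOL-Analysis.Analysis"
begin

definition metric_measure_space :: "'a::metric_space measure \<Rightarrow> bool" where
  "metric_measure_space M \<longleftrightarrow> sets M = sets borel \<and>
     (\<forall>x r. 0 < r \<longrightarrow> 0 < emeasure M (ball x r) \<and> emeasure M (ball x r) < \<infinity>)"

definition ring_continuous :: "'a::metric_space measure \<Rightarrow> bool" where
  "ring_continuous M \<longleftrightarrow> (\<forall>x. continuous_on {0<..} (\<lambda>r. measure M (ball x r)))"

definition domain :: "'a::metric_space set \<Rightarrow> bool" where
  "domain \<Omega> \<longleftrightarrow> open \<Omega> \<and> connected \<Omega> \<and> \<Omega> \<noteq> {}"

text \<open>Admissible radius function. dist(x, boundary) is infdist; when the boundary
  is empty the distance is +infinity, so the upper bound is vacuous.\<close>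
definition admissible_radius :: "'a::metric_space set \<Rightarrow> ('a \<Rightarrow> real) \<Rightarrow> bool" where
  "admissible_radius \<Omega> \<rho> \<longleftrightarrow> continuous_on (closure \<Omega>) \<rho> \<and>
     (\<forall>x\<in>closure \<Omega>. 0 \<le> \<rho> x) \<and>
     (\<forall>x\<in>\<Omega>. 0 < \<rho> x \<and> (frontier \<Omega> \<noteq> {} \<longrightarrow> \<rho> x \<le> infdist x (frontier \<Omega>))) \<and>
     (\<forall>x\<in>closure \<Omega>. \<rho> x = 0 \<longleftrightarrow> x \<in> frontier \<Omega>)"

definition Linfty_on :: "'a::metric_space measure \<Rightarrow> 'a set \<Rightarrow> ('a \<Rightarrow> real) \<Rightarrow> bool" where
  "Linfty_on M \<Omega> u \<longleftrightarrow> u \<in> borel_measurable (restrict_space M \<Omega>) \<and>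
     (\<exists>C. AE x in M. x \<in> \<Omega> \<longrightarrow> \<bar>u x\<bar> \<le> C)"

definition avg_op :: "'a::metric_space measure \<Rightarrow> 'a set \<Rightarrow> ('a \<Rightarrow> real) \<Rightarrow> ('a \<Rightarrow> real) \<Rightarrow> 'a \<Rightarrow> real" where
  "avg_op M \<Omega> \<rho> u x = (1 / measure M (cball x (\<rho> x))) *
     set_lebesgue_integral M (cball x (\<rho> x)) (\<lambda>y. indicator \<Omega> y * u y)"

end

theory Submission
  imports Defs
begin

lemma sphere_null:
  fixes M :: "'a::metric_space measure"
  assumes mm: "metric_measure_space M" and rc: "ring_continuous M" and r: "0 < r"
  shows "cball x r - ball x r \<in> null_sets M"
proof -
  have sets: "sets M = sets borel" and fin: "\<And>x r. 0 < r \<Longrightarrow> emeasure M (ball x r) < \<infinity>"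
    using mm unfolding metric_measure_space_def by auto
  have cs: "cball x r \<in> sets M" "ball x r \<in> sets M" using sets by auto
  have finc: "emeasure M (cball x r) < \<infinity>"
  proof -
    have "emeasure M (cball x r) \<le> emeasure M (ball x (r+1))"
      using sets by (intro emeasure_mono) auto
    also have "\<dots> < \<infinity>" using fin r by simp
    finally show ?thesis .
  qed
  have le: "measure M (cball x r) \<le> measure M (ball x r)"
  proof (rule tendsto_lowerbound)
    have "continuous_on {0<..} (\<lambda>r. measure M (ball x r))"
      using rc unfolding ring_continuous_def by auto
    hence "((\<lambda>s. measure M (ball x s)) \<longlongrightarrow> measure M (ball x r)) (at r)"
      using r by (simp add: continuous_on_eq_continuous_at isCont_def)
    thus "((\<lambda>s. measure M (ball x s)) \<longlongrightarrow> measure M (ball x r)) (at_right r)"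
      by (rule filterlim_mono) (auto simp: at_le)
    show "\<forall>\<^sub>F s in at_right r. measure M (cball x r) \<le> measure M (ball x s)"
      unfolding eventually_at_right_field
    proof (intro exI[of _ "r+1"] conjI allI impI)
      fix s assume "r < s" "s < r + 1"
      then show "measure M (cball x r) \<le> measure M (ball x s)"
        using fin[of s x] r sets by (intro measure_mono_fmeasurable) (auto simp: fmeasurable_def)
    qed simp
  qed simp
  have "measure M (cball x r - ball x r) = measure M (cball x r) - measure M (ball x r)"
    using finc cs by (intro measure_Diff) (auto simp: fmeasurable_def)
  hence "measure M (cball x r - ball x r) = 0" using le
    by (metis diff_ge_0_iff_ge dual_order.antisym measure_nonneg diff_le_0_iff_le)
  moreover have "emeasure M (cball x r - ball x r) < \<infinity>"
    using finc cs by (meson Diff_subset emeasure_mono le_less_trans)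
  ultimately have "emeasure M (cball x r - ball x r) = 0"
    using emeasure_eq_ennreal_measure[of M "cball x r - ball x r"] by simp
  thus ?thesis using cs by (auto intro: null_setsI)
qed

lemma cont_int:
  fixes M :: "'a::metric_space measure" and \<rho> h :: "'a \<Rightarrow> real" and C :: real
  assumes mm: "metric_measure_space M" and rc: "ring_continuous M"
    and hm: "h \<in> borel_measurable M" and hb: "AE y in M. \<bar>h y\<bar> \<le> C"
    and rcont: "isCont \<rho> x" and rpos: "0 < \<rho> x"
  shows "isCont (\<lambda>z. LINT y|M. indicator (cball z (\<rho> z)) y * h y) x"
proof -
  have sets: "sets M = sets borel" and fin: "\<And>x r. 0 < r \<Longrightarrow> emeasure M (ball x r) < \<infinity>"
    using mm unfolding metric_measure_space_def by auto
  have ind: "\<And>A. A \<in> sets borel \<Longrightarrow> indicator A \<in> borel_measurable M"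
    using sets by (intro borel_measurable_indicator) auto
  show ?thesis
    unfolding continuous_at_sequentially comp_def
  proof (intro allI impI)
    fix s assume s: "s \<longlonglongrightarrow> x"
    have rs: "(\<lambda>n. \<rho> (s n)) \<longlonglongrightarrow> \<rho> x" using isCont_tendsto_compose[OF rcont s] .
    have "eventually (\<lambda>n. dist (s n) x < 1 \<and> \<rho> (s n) < \<rho> x + 1) sequentially"
      using tendstoD[OF s, of 1] order_tendstoD(2)[OF rs, of "\<rho> x + 1"]
      by (auto intro: eventually_conj)
    then obtain N where N: "\<And>n. n \<ge> N \<Longrightarrow> dist (s n) x < 1 \<and> \<rho> (s n) < \<rho> x + 1"
      by (auto simp: eventually_sequentially)
    define R where "R = \<rho> x + 2"
    have sub: "cball (s (n+N)) (\<rho> (s (n+N))) \<subseteq> ball x R" for n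
    proof
      fix y assume "y \<in> cball (s (n+N)) (\<rho> (s (n+N)))"
      hence "dist (s (n+N)) y \<le> \<rho> (s (n+N))" by simp
      moreover have "dist x y \<le> dist x (s (n+N)) + dist (s (n+N)) y" by (rule dist_triangle)
      moreover have "dist (s (n+N)) x < 1 \<and> \<rho> (s (n+N)) < \<rho> x + 1" using N[of "n+N"] by simp
      ultimately show "y \<in> ball x R" unfolding R_def by (simp add: dist_commute)
    qed
    have s': "(\<lambda>n. s (n+N)) \<longlonglongrightarrow> x" using LIMSEQ_ignore_initial_segment[OF s] .
    have rs': "(\<lambda>n. \<rho> (s (n+N))) \<longlonglongrightarrow> \<rho> x" using LIMSEQ_ignore_initial_segment[OF rs] .
    have null: "AE y in M. y \<notin> cball x (\<rho> x) - ball x (\<rho> x)"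
      by (rule AE_I'[OF sphere_null[OF mm rc rpos, where x=x]]) auto
    show "(\<lambda>n. LINT y|M. indicator (cball (s n) (\<rho> (s n))) y * h y) \<longlonglongrightarrow>
          (LINT y|M. indicator (cball x (\<rho> x)) y * h y)"
    proof (rule LIMSEQ_offset[where k=N],
        rule integral_dominated_convergence[where w="\<lambda>y. C * (indicator (ball x R) y :: real)"])
      show "(\<lambda>y. indicator (cball x (\<rho> x)) y * h y) \<in> borel_measurable M"
        by (intro borel_measurable_times ind hm) auto
      show "(\<lambda>y. indicator (cball (s (i+N)) (\<rho> (s (i+N)))) y * h y) \<in> borel_measurable M" for i
        by (intro borel_measurable_times ind hm) auto
      have "ball x R \<in> sets M" using sets by auto
      moreover have "emeasure M (ball x R) < \<infinity>" using fin rpos unfolding R_def by simp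
      ultimately show "integrable M (\<lambda>y. C * indicator (ball x R) y)"
        by (intro integrable_mult_right integrable_real_indicator)
      show "AE y in M. norm (indicator (cball (s (i+N)) (\<rho> (s (i+N)))) y * h y)
              \<le> C * indicator (ball x R) y" for i
        using hb
      proof (rule eventually_mono)
        fix y assume "\<bar>h y\<bar> \<le> C"
        thus "norm (indicator (cball (s (i+N)) (\<rho> (s (i+N)))) y * h y)
              \<le> C * indicator (ball x R) y"
          using sub[of i] by (auto simp: indicator_def)
      qed
      show "AE y in M. (\<lambda>i. indicator (cball (s (i+N)) (\<rho> (s (i+N)))) y * h y) \<longlonglongrightarrow>
              indicator (cball x (\<rho> x)) y * h y"
        using null
      proof (rule eventually_mono)
        fix y assume y: "y \<notin> cball x (\<rho> x) - ball x (\<rho> x)"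
        have d: "(\<lambda>n. \<rho> (s (n+N)) - dist (s (n+N)) y) \<longlonglongrightarrow> \<rho> x - dist x y"
          by (intro tendsto_intros rs' s')
        show "(\<lambda>i. indicator (cball (s (i+N)) (\<rho> (s (i+N)))) y * h y) \<longlonglongrightarrow>
              indicator (cball x (\<rho> x)) y * h y"
        proof (cases "dist x y < \<rho> x")
          case True
          have "eventually (\<lambda>n. 0 < \<rho> (s (n+N)) - dist (s (n+N)) y) sequentially"
            using order_tendstoD(1)[OF d, of 0] True by simp
          hence "eventually (\<lambda>n. indicator (cball (s (n+N)) (\<rho> (s (n+N)))) y * h y
                   = indicator (cball x (\<rho> x)) y * h y) sequentially"
            by (rule eventually_mono) (use True in auto)
          thus ?thesis by (rule tendsto_eventually)
        next
          case False
          hence F: "dist x y > \<rho> x" using y by auto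
          have "eventually (\<lambda>n. \<rho> (s (n+N)) - dist (s (n+N)) y < 0) sequentially"
            using order_tendstoD(2)[OF d, of 0] F by simp
          hence "eventually (\<lambda>n. indicator (cball (s (n+N)) (\<rho> (s (n+N)))) y * h y
                   = indicator (cball x (\<rho> x)) y * h y) sequentially"
            by (rule eventually_mono) (use F in auto)
          thus ?thesis by (rule tendsto_eventually)
        qed
      qed
    qed
  qed
qed

theorem proposition3p4:
  fixes M :: "'a::metric_space measure" and \<Omega> :: "'a set" and \<rho> :: "'a \<Rightarrow> real"
  assumes "metric_measure_space M"
    and "ring_continuous M"
    and "domain \<Omega>"
    and "admissible_radius \<Omega> \<rho>"
    and "Linfty_on M \<Omega> u"
  shows "continuous_on \<Omega> (avg_op M \<Omega> \<rho> u)"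
proof -
  note mm = assms(1) and rc = assms(2)
  have sets: "sets M = sets borel" and fin: "\<And>x r. 0 < r \<Longrightarrow> emeasure M (ball x r) < \<infinity>"
    and pos: "\<And>x r. 0 < r \<Longrightarrow> 0 < emeasure M (ball x r)"
    using mm unfolding metric_measure_space_def by auto
  have sp: "space M = UNIV" using sets_eq_imp_space_eq[OF sets] by simp
  have op: "open \<Omega>" using assms(3) unfolding domain_def by auto
  have rcont: "continuous_on (closure \<Omega>) \<rho>" and rpos: "\<And>x. x \<in> \<Omega> \<Longrightarrow> 0 < \<rho> x"
    using assms(4) unfolding admissible_radius_def by auto
  have rc': "continuous_on \<Omega> \<rho>" using continuous_on_subset[OF rcont closure_subset] .
  have um: "u \<in> borel_measurable (restrict_space M \<Omega>)" and
    "\<exists>C. AE x in M. x \<in> \<Omega> \<longrightarrow> \<bar>u x\<bar> \<le> C"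
    using assms(5) unfolding Linfty_on_def by auto
  then obtain C where C: "AE x in M. x \<in> \<Omega> \<longrightarrow> \<bar>u x\<bar> \<le> C" by auto
  define f where "f = (\<lambda>y. indicator \<Omega> y * u y)"
  have \<Omega>s: "\<Omega> \<inter> space M \<in> sets M" using sets op by auto
  have fm: "f \<in> borel_measurable M"
    using borel_measurable_restrict_space_iff[OF \<Omega>s, of u] um unfolding f_def by simp
  have fb: "AE y in M. \<bar>f y\<bar> \<le> \<bar>C\<bar>"
    using C by (rule eventually_mono) (auto simp: f_def indicator_def)
  have onem: "(\<lambda>y. 1::real) \<in> borel_measurable M" by simp
  have oneb: "AE y in M. \<bar>(\<lambda>y. 1::real) y\<bar> \<le> 1" by simp
  define D where "D = (\<lambda>z. LINT y|M. indicator (cball z (\<rho> z)) y * (\<lambda>y. 1::real) y)"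
  define Nf where "Nf = (\<lambda>z. LINT y|M. indicator (cball z (\<rho> z)) y * f y)"
  have Deq: "measure M (cball z r) = (LINT y|M. indicator (cball z r) y * (\<lambda>y. 1::real) y)" for z r
  proof -
    have "emeasure M (cball z r) \<le> emeasure M (ball z (\<bar>r\<bar>+1))"
      using sets by (intro emeasure_mono) auto
    also have "\<dots> < \<infinity>" using fin by simp
    finally show ?thesis using sets by (simp add: integral_indicator)
  qed
  have eq: "avg_op M \<Omega> \<rho> u = (\<lambda>z. 1 / D z * Nf z)"
    unfolding avg_op_def D_def Nf_def f_def set_lebesgue_integral_def
    by (rule ext) (simp add: Deq)
  show ?thesis
    unfolding eq continuous_on_eq_continuous_at[OF op]
  proof
    fix x assume x: "x \<in> \<Omega>"
    have ic: "isCont \<rho> x" using rc' op x by (simp add: continuous_on_eq_continuous_at)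
    have cD: "isCont D x" unfolding D_def by (rule cont_int[OF mm rc onem oneb ic rpos[OF x]])
    have cN: "isCont Nf x" unfolding Nf_def by (rule cont_int[OF mm rc fm fb ic rpos[OF x]])
    have "0 < emeasure M (ball x (\<rho> x))" using pos rpos[OF x] by simp
    also have "\<dots> \<le> emeasure M (cball x (\<rho> x))" using sets by (intro emeasure_mono) auto
    finally have "0 < emeasure M (cball x (\<rho> x))" .
    moreover have "emeasure M (cball x (\<rho> x)) < \<infinity>"
    proof -
      have "emeasure M (cball x (\<rho> x)) \<le> emeasure M (ball x (\<bar>\<rho> x\<bar>+1))"
        using sets by (intro emeasure_mono) auto
      also have "\<dots> < \<infinity>" using fin by simp
      finally show ?thesis .
    qed
    ultimately have "measure M (cball x (\<rho> x)) \<noteq> 0"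
      by (simp add: measure_def enn2real_eq_0_iff) (metis less_irrefl)
    hence "D x \<noteq> 0" unfolding D_def using Deq by simp
    thus "isCont (\<lambda>z. 1 / D z * Nf z) x" using cD cN by (intro continuous_intros) auto
  qed
qed

end
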